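(* In Minkowski spacetime, every mixed-symmetry Killing tensor $T_{\alpha\beta\gamma}$ is a finite linear combination of tensors of the form $X_{\alpha(\beta}\xi_{\gamma)}$, where each $X_{\alpha\beta}$ is a Killing–Yano tensor and each $\xi_\gamma$ is a Killing vector of Minkowski spacetime.
   Context: A mixed-symmetry Killing tensor is a rank-3 tensor field $T_{\alpha\beta\gamma}=N_{\alpha(\beta\gamma)}$ for some $N_{\alpha\beta\gamma}=N_{[\alpha\beta]\gamma}$, satisfying $\nabla_{(\delta}T_{|\alpha|\beta\gamma)}=0$ (written $T_{\alpha(\beta\gamma;\delta)}=0$). A Killing–Yano tensor is $X_{\mu\nu}=X_{[\mu\nu]}$ with $\nabla_{(\alpha}X_{\beta)\gamma}=0$; a Killing vector satisfies $\nabla_{(\alpha}\xi_{\beta)}=0$. Symmetrizations carry weight $1/n!$. *)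

theory Defs
  imports "HOL-Analysis.Analysis"
begin

text \<open>Minkowski spacetime in global inertial (Cartesian) coordinates: points are
  vectors in real^4, tensor indices range over the 4-element type 4.  In these
  coordinates the Levi-Civita connection of the flat metric diag(-1,1,1,1) has
  vanishing Christoffel symbols, so the covariant derivative of a covariant tensor
  field is componentwise the partial derivative.\<close>

type_synonym point = "real ^ 4"
type_synonym idx = "4"

definition pd :: "idx \<Rightarrow> (point \<Rightarrow> real) \<Rightarrow> point \<Rightarrow> real" where
  "pd d f x = deriv (\<lambda>t. f (x + t *\<^sub>R axis d 1)) 0"

definition iter_pd :: "idx list \<Rightarrow> (point \<Rightarrow> real) \<Rightarrow> point \<Rightarrow> real" where
  "iter_pd ds f = foldr pd ds f"

definition smooth_fun :: "(point \<Rightarrow> real) \<Rightarrow> bool" where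
  "smooth_fun f \<longleftrightarrow> (\<forall>ds x. iter_pd ds f differentiable (at x))"

definition smooth1 :: "(point \<Rightarrow> idx \<Rightarrow> real) \<Rightarrow> bool" where
  "smooth1 v \<longleftrightarrow> (\<forall>a. smooth_fun (\<lambda>x. v x a))"

definition smooth2 :: "(point \<Rightarrow> idx \<Rightarrow> idx \<Rightarrow> real) \<Rightarrow> bool" where
  "smooth2 X \<longleftrightarrow> (\<forall>a b. smooth_fun (\<lambda>x. X x a b))"

definition smooth3 :: "(point \<Rightarrow> idx \<Rightarrow> idx \<Rightarrow> idx \<Rightarrow> real) \<Rightarrow> bool" where
  "smooth3 T \<longleftrightarrow> (\<forall>a b c. smooth_fun (\<lambda>x. T x a b c))"

definition killing_vector :: "(point \<Rightarrow> idx \<Rightarrow> real) \<Rightarrow> bool" where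
  "killing_vector \<xi> \<longleftrightarrow> smooth1 \<xi> \<and>
     (\<forall>x a b. (pd a (\<lambda>y. \<xi> y b) x + pd b (\<lambda>y. \<xi> y a) x) / 2 = 0)"

definition killing_yano :: "(point \<Rightarrow> idx \<Rightarrow> idx \<Rightarrow> real) \<Rightarrow> bool" where
  "killing_yano X \<longleftrightarrow> smooth2 X \<and>
     (\<forall>x a b. X x a b = - X x b a) \<and>
     (\<forall>x a b c. (pd a (\<lambda>y. X y b c) x + pd b (\<lambda>y. X y a c) x) / 2 = 0)"

definition mixed_killing :: "(point \<Rightarrow> idx \<Rightarrow> idx \<Rightarrow> idx \<Rightarrow> real) \<Rightarrow> bool" where
  "mixed_killing T \<longleftrightarrow> smooth3 T \<and>
     (\<exists>N. smooth3 N \<and> (\<forall>x a b c. N x a b c = - N x b a c) \<and>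
          (\<forall>x a b c. T x a b c = (N x a b c + N x a c b) / 2)) \<and>
     (\<forall>x a b c d.
        (pd d (\<lambda>y. T y a b c) x + pd b (\<lambda>y. T y a c d) x + pd c (\<lambda>y. T y a d b) x
       + pd d (\<lambda>y. T y a c b) x + pd c (\<lambda>y. T y a b d) x + pd b (\<lambda>y. T y a d c) x) / 6 = 0)"

end

theory Submission
  imports Defs
begin

lemma line_deriv:
  fixes f :: "point \<Rightarrow> real"
  assumes "(f has_derivative f') (at (x + s *\<^sub>R v))"
  shows "((\<lambda>t. f (x + t *\<^sub>R v)) has_real_derivative f' v) (at s)"
proof -
  have g: "((\<lambda>t. x + t *\<^sub>R v) has_derivative (\<lambda>h. h *\<^sub>R v)) (at s)"
    by (auto intro!: derivative_eq_intros)
  have l: "linear f'" using assms has_derivative_linear by blast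
  have "((\<lambda>t. f (x + t *\<^sub>R v)) has_derivative (\<lambda>h. f' (h *\<^sub>R v))) (at s)"
    using has_derivative_compose[OF g assms] by (simp add: o_def)
  moreover have "(\<lambda>h. f' (h *\<^sub>R v)) = (*) (f' v)"
    using linear_scale[OF l] by (auto simp: fun_eq_iff)
  ultimately show ?thesis unfolding has_field_derivative_def by simp
qed

lemma pd_eq:
  assumes "(f has_derivative f') (at x)"
  shows "pd d f x = f' (axis d 1)"
  unfolding pd_def
  by (rule DERIV_imp_deriv, rule line_deriv) (use assms in simp)

lemma pd_line:
  assumes "f differentiable (at (x + s *\<^sub>R axis d 1))"
  shows "((\<lambda>t. f (x + t *\<^sub>R axis d 1)) has_real_derivative pd d f (x + s *\<^sub>R axis d 1)) (at s)"
proof -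
  obtain f' where f': "(f has_derivative f') (at (x + s *\<^sub>R axis d 1))"
    using assms unfolding differentiable_def by blast
  show ?thesis using line_deriv[OF f'] pd_eq[OF f'] by simp
qed

lemma iter_pd_snoc: "iter_pd (ds @ [d]) f = iter_pd ds (pd d f)"
  by (simp add: iter_pd_def)

lemma smooth_pd: "smooth_fun f \<Longrightarrow> smooth_fun (pd d f)"
  unfolding smooth_fun_def by (metis iter_pd_snoc)

lemma smooth_diff: "smooth_fun f \<Longrightarrow> f differentiable (at x)"
  unfolding smooth_fun_def iter_pd_def by (metis foldr.simps(1) id_apply)

lemma smooth_cont: "smooth_fun f \<Longrightarrow> isCont f x"
  by (simp add: differentiable_imp_continuous_within smooth_diff)

lemma pd_add:
  assumes "f differentiable (at x)" "g differentiable (at x)"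
  shows "pd d (\<lambda>y. f y + g y) x = pd d f x + pd d g x"
proof -
  obtain f' g' where "(f has_derivative f') (at x)" "(g has_derivative g') (at x)"
    using assms unfolding differentiable_def by blast
  note h = this
  show ?thesis using pd_eq[OF has_derivative_add[OF h]] pd_eq[OF h(1)] pd_eq[OF h(2)] by simp
qed

lemma pd_diff:
  assumes "f differentiable (at x)" "g differentiable (at x)"
  shows "pd d (\<lambda>y. f y - g y) x = pd d f x - pd d g x"
proof -
  obtain f' g' where "(f has_derivative f') (at x)" "(g has_derivative g') (at x)"
    using assms unfolding differentiable_def by blast
  note h = this
  show ?thesis using pd_eq[OF has_derivative_diff[OF h]] pd_eq[OF h(1)] pd_eq[OF h(2)] by simp
qed

lemma pd_cmult:
  assumes "f differentiable (at x)"
  shows "pd d (\<lambda>y. c * f y) x = c * pd d f x"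
proof -
  obtain f' where "(f has_derivative f') (at x)"
    using assms unfolding differentiable_def by blast
  note h = this
  show ?thesis using pd_eq[OF has_derivative_mult_right[OF h, of c]] pd_eq[OF h] by simp
qed

lemma pd_const: "pd d (\<lambda>y. c) x = 0"
  using pd_eq[OF has_derivative_const] by simp

lemma pd_zero_fun: "(\<And>y. f y = 0) \<Longrightarrow> pd d f x = 0"
proof -
  assume "\<And>y. f y = 0" then have "f = (\<lambda>y. 0)" by auto
  then show ?thesis using pd_const by simp
qed

lemma pd_coord: "pd d (\<lambda>y. y $ k) x = (if k = d then 1 else 0)"
proof -
  have "((\<lambda>y::point. y $ k) has_derivative (\<lambda>y. y $ k)) (at x)"
    by (rule bounded_linear_imp_has_derivative) (rule bounded_linear_vec_nth)
  from pd_eq[OF this] show ?thesis by (simp add: axis_def)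
qed

lemma mvt_box:
  assumes sm: "smooth_fun f" and h: "h > 0"
  shows "\<exists>s t. 0 < s \<and> s < h \<and> 0 < t \<and> t < h \<and>
     f (x + h *\<^sub>R axis j 1 + h *\<^sub>R axis i 1) - f (x + h *\<^sub>R axis i 1) - f (x + h *\<^sub>R axis j 1) + f x
       = h * h * pd j (pd i f) (x + s *\<^sub>R axis i 1 + t *\<^sub>R axis j 1)"
proof -
  define u where "u = axis i (1::real)"
  define v where "v = axis j (1::real)"
  define \<phi> where "\<phi> \<sigma> = f (x + h *\<^sub>R v + \<sigma> *\<^sub>R u) - f (x + \<sigma> *\<^sub>R u)" for \<sigma>
  have d\<phi>: "(\<phi> has_real_derivative (pd i f (x + h *\<^sub>R v + \<sigma> *\<^sub>R u) - pd i f (x + \<sigma> *\<^sub>R u))) (at \<sigma>)" for \<sigma>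
    unfolding \<phi>_def u_def
    by (intro DERIV_diff pd_line smooth_diff[OF sm])
  obtain s where s: "0 < s" "s < h" "\<phi> h - \<phi> 0 = (h - 0) * (pd i f (x + h *\<^sub>R v + s *\<^sub>R u) - pd i f (x + s *\<^sub>R u))"
  proof -
    have "\<exists>z>0. z < h \<and> \<phi> h - \<phi> 0 = (h - 0) * (pd i f (x + h *\<^sub>R v + z *\<^sub>R u) - pd i f (x + z *\<^sub>R u))"
      by (rule MVT2[OF h]) (rule d\<phi>)
    then show ?thesis using that by blast
  qed
  define \<psi> where "\<psi> \<tau> = pd i f (x + s *\<^sub>R u + \<tau> *\<^sub>R v)" for \<tau>
  have d\<psi>: "(\<psi> has_real_derivative (pd j (pd i f) (x + s *\<^sub>R u + \<tau> *\<^sub>R v))) (at \<tau>)" for \<tau>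
    unfolding \<psi>_def v_def
    by (intro pd_line smooth_diff[OF smooth_pd[OF sm]])
  obtain t where t: "0 < t" "t < h" "\<psi> h - \<psi> 0 = (h - 0) * pd j (pd i f) (x + s *\<^sub>R u + t *\<^sub>R v)"
  proof -
    have "\<exists>z>0. z < h \<and> \<psi> h - \<psi> 0 = (h - 0) * pd j (pd i f) (x + s *\<^sub>R u + z *\<^sub>R v)"
      by (rule MVT2[OF h]) (rule d\<psi>)
    then show ?thesis using that by blast
  qed
  have e1: "\<psi> h = pd i f (x + h *\<^sub>R v + s *\<^sub>R u)" unfolding \<psi>_def by (simp add: algebra_simps)
  have e2: "\<psi> 0 = pd i f (x + s *\<^sub>R u)" unfolding \<psi>_def by simp
  have "\<phi> h - \<phi> 0 = f (x + h *\<^sub>R v + h *\<^sub>R u) - f (x + h *\<^sub>R u) - f (x + h *\<^sub>R v) + f x"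
    unfolding \<phi>_def by simp
  then show ?thesis using s t e1 e2 unfolding u_def v_def
    by (intro exI[of _ s] exI[of _ t]) auto
qed

lemma schwarz:
  assumes sm: "smooth_fun f"
  shows "pd i (pd j f) x = pd j (pd i f) x"
proof (rule ccontr)
  define G where "G = pd j (pd i f)"
  define H where "H = pd i (pd j f)"
  assume ne: "pd i (pd j f) x \<noteq> pd j (pd i f) x"
  define \<epsilon> where "\<epsilon> = \<bar>G x - H x\<bar> / 2"
  have ep: "\<epsilon> > 0" using ne unfolding \<epsilon>_def G_def H_def by auto
  have cG: "continuous (at x) G" unfolding G_def
    using smooth_cont[OF smooth_pd[OF smooth_pd[OF sm]]] by simp
  have cH: "continuous (at x) H" unfolding H_def
    using smooth_cont[OF smooth_pd[OF smooth_pd[OF sm]]] by simp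
  obtain d1 where d1: "d1 > 0" "\<And>y. dist y x < d1 \<Longrightarrow> dist (G y) (G x) < \<epsilon>"
    using cG ep unfolding continuous_at_eps_delta by blast
  obtain d2 where d2: "d2 > 0" "\<And>y. dist y x < d2 \<Longrightarrow> dist (H y) (H x) < \<epsilon>"
    using cH ep unfolding continuous_at_eps_delta by blast
  define h where "h = min d1 d2 / 2"
  have h: "h > 0" using d1 d2 unfolding h_def by auto
  obtain s t where st: "0 < s" "s < h" "0 < t" "t < h"
     "f (x + h *\<^sub>R axis j 1 + h *\<^sub>R axis i 1) - f (x + h *\<^sub>R axis i 1) - f (x + h *\<^sub>R axis j 1) + f x
       = h * h * G (x + s *\<^sub>R axis i 1 + t *\<^sub>R axis j 1)"
    using mvt_box[OF sm h, of x j i] unfolding G_def by blast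
  obtain s' t' where st': "0 < s'" "s' < h" "0 < t'" "t' < h"
     "f (x + h *\<^sub>R axis i 1 + h *\<^sub>R axis j 1) - f (x + h *\<^sub>R axis j 1) - f (x + h *\<^sub>R axis i 1) + f x
       = h * h * H (x + s' *\<^sub>R axis j 1 + t' *\<^sub>R axis i 1)"
    using mvt_box[OF sm h, of x i j] unfolding H_def by blast
  define p where "p = x + s *\<^sub>R axis i 1 + t *\<^sub>R axis j 1"
  define q where "q = x + s' *\<^sub>R axis j 1 + t' *\<^sub>R axis i 1"
  have "x + h *\<^sub>R axis i 1 + h *\<^sub>R axis j 1 = x + h *\<^sub>R axis j 1 + h *\<^sub>R axis i 1"
    by (simp add: algebra_simps)
  then have "f (x + h *\<^sub>R axis i 1 + h *\<^sub>R axis j 1) = f (x + h *\<^sub>R axis j 1 + h *\<^sub>R axis i 1)" by (rule arg_cong)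
  then have "h * h * G p = h * h * H q" using st(5) st'(5) unfolding p_def q_def by linarith
  then have GH: "G p = H q" using h by simp
  have "dist p x \<le> norm (s *\<^sub>R axis i (1::real)) + norm (t *\<^sub>R axis j (1::real))"
    unfolding p_def dist_norm by (simp add: norm_triangle_ineq del: norm_scaleR)
  also have "\<dots> = s + t" using st by simp
  finally have "dist p x < min d1 d2" using st unfolding h_def by linarith
  then have g: "dist (G p) (G x) < \<epsilon>" using d1 by auto
  have "dist q x \<le> norm (s' *\<^sub>R axis j (1::real)) + norm (t' *\<^sub>R axis i (1::real))"
    unfolding q_def dist_norm by (simp add: norm_triangle_ineq del: norm_scaleR)
  also have "\<dots> = s' + t'" using st' by simp
  finally have "dist q x < min d1 d2" using st' unfolding h_def by linarith
  then have hh: "dist (H q) (H x) < \<epsilon>" using d2 by auto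
  show False using g hh GH unfolding \<epsilon>_def dist_real_def by (simp add: abs_if split: if_splits)
qed

lemma mult_if01 [simp]:
  "(a::real) * (b * (if P then 1 else 0)) = (if P then a * b else 0)"
  "(a::real) * ((if P then 1 else 0) * b) = (if P then a * b else 0)"
  "(a::real) * (if P then 1 else 0) = (if P then a else 0)"
  "(if P then 1 else 0) * (a::real) = (if P then a else 0)"
  "(a::real) * (if P then b else 0) = (if P then a * b else 0)"
  "(if P then b else 0) * (a::real) = (if P then b * a else 0)"
  by auto

lemma sum_if_outer:
  "(\<Sum>j\<in>UNIV. \<Sum>k\<in>UNIV. if j = i then g j k else (0::real)) = (\<Sum>k\<in>UNIV. g (i::idx) (k::idx))"
proof -
  have "(\<Sum>k\<in>UNIV. if j = i then g j k else (0::real)) = (if j = i then \<Sum>k\<in>UNIV. g j k else 0)" for j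
    by (cases "j = i") auto
  then show ?thesis by (simp add: sum.delta sum.delta')
qed

definition poly2 :: "real \<Rightarrow> (idx \<Rightarrow> real) \<Rightarrow> (idx \<Rightarrow> idx \<Rightarrow> real) \<Rightarrow> point \<Rightarrow> real" where
  "poly2 a b c y = a + (\<Sum>j\<in>UNIV. b j * y $ j) + (\<Sum>j\<in>UNIV. \<Sum>k\<in>UNIV. c j k * (y $ j * y $ k))"

lemma poly2_has_derivative:
  "(poly2 a b c has_derivative (\<lambda>h. (\<Sum>j\<in>UNIV. b j * h $ j) + (\<Sum>j\<in>UNIV. \<Sum>k\<in>UNIV. c j k * (x $ j * h $ k + h $ j * x $ k)))) (at x)"
  unfolding poly2_def
  by (rule derivative_eq_intros has_derivative_sum bounded_linear_imp_has_derivative bounded_linear_vec_nth | simp)+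

lemma poly2_diff: "poly2 a b c differentiable (at x)"
  using poly2_has_derivative unfolding differentiable_def by blast

lemma pd_poly2: "pd i (poly2 a b c) x = b i + (\<Sum>k\<in>UNIV. c i k * x $ k) + (\<Sum>j\<in>UNIV. c j i * x $ j)"
proof -
  have "pd i (poly2 a b c) x = (\<Sum>j\<in>UNIV. b j * axis i 1 $ j) + (\<Sum>j\<in>UNIV. \<Sum>k\<in>UNIV. c j k * (x $ j * axis i 1 $ k + axis i 1 $ j * x $ k))"
    by (rule pd_eq[OF poly2_has_derivative])
  also have "\<dots> = b i + (\<Sum>k\<in>UNIV. c i k * x $ k) + (\<Sum>j\<in>UNIV. c j i * x $ j)"
  proof -
    have ax: "axis i (1::real) $ k = (if k = i then 1 else 0)" for k by (simp add: axis_def)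
    have "(\<Sum>j\<in>UNIV. \<Sum>k\<in>UNIV. c j k * (x $ j * axis i 1 $ k + axis i 1 $ j * x $ k))
        = (\<Sum>j\<in>UNIV. \<Sum>k\<in>UNIV. (if k = i then c j k * x $ j else 0)) + (\<Sum>j\<in>UNIV. \<Sum>k\<in>UNIV. (if j = i then c j k * x $ k else 0))"
      by (simp add: ax ring_distribs sum.distrib mult.assoc cong: if_cong)
    also have "\<dots> = (\<Sum>k\<in>UNIV. c i k * x $ k) + (\<Sum>j\<in>UNIV. c j i * x $ j)"
      by (simp only: sum_if_outer) (simp add: sum.delta sum.delta')
    finally show ?thesis by (simp add: ax)
  qed
  finally show ?thesis .
qed

lemma basis_axis: "(b::point) \<in> Basis \<Longrightarrow> \<exists>i. b = axis i 1"
  by (auto simp: Basis_vec_def)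

lemma grad0_const:
  fixes f :: "point \<Rightarrow> real"
  assumes dif: "\<And>x. f differentiable (at x)" and z: "\<And>d x. pd d f x = 0"
  shows "f x = f y"
proof -
  have "(f has_derivative (\<lambda>h. 0)) (at x within UNIV)" for x
  proof -
    obtain f' where f': "(f has_derivative f') (at x)" using dif unfolding differentiable_def by blast
    have "f' = (\<lambda>h. 0)"
    proof (rule linear_eq_stdbasis)
      show "linear f'" using f' has_derivative_linear by blast
      show "linear (\<lambda>h::point. 0::real)" by (simp add: linear_zero)
      fix b :: point assume "b \<in> Basis"
      then obtain i where "b = axis i 1" using basis_axis by blast
      then show "f' b = 0" using pd_eq[OF f', of i] z by simp
    qed
    then show ?thesis using f' by simp
  qed
  then obtain c where "\<forall>x\<in>UNIV. f x = c" using has_derivative_zero_constant[of UNIV f] by auto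
  then show ?thesis by simp
qed

lemma poly2_0: "poly2 a b c 0 = a" by (simp add: poly2_def)

lemma quad_rep:
  assumes sm: "smooth_fun f" and d3: "\<And>i j k x. pd i (pd j (pd k f)) x = 0"
  shows "f x = poly2 (f 0) (\<lambda>k. pd k f 0) (\<lambda>j k. pd j (pd k f) 0 / 2) x"
proof -
  define C where "C j k = pd j (pd k f) 0" for j k
  have s1: "pd j (pd k f) y = C j k" for j k y
    unfolding C_def
    by (rule grad0_const) (auto intro!: smooth_diff smooth_pd sm d3)
  define B where "B k = pd k f 0" for k
  have s2: "pd k f y = B k + (\<Sum>j\<in>UNIV. C j k * y $ j)" for k y
  proof -
    define p where "p = poly2 0 (\<lambda>j. C j k) (\<lambda>_ _. 0)"
    have pz: "p y = (\<Sum>j\<in>UNIV. C j k * y $ j)" for y unfolding p_def poly2_def by simp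
    have "(\<lambda>y. pd k f y - p y) y = (\<lambda>y. pd k f y - p y) 0"
    proof (rule grad0_const)
      show "(\<lambda>y. pd k f y - p y) differentiable (at x)" for x
        unfolding p_def by (intro differentiable_diff smooth_diff smooth_pd sm poly2_diff)
      show "pd d (\<lambda>y. pd k f y - p y) x = 0" for d x
        unfolding p_def
        by (subst pd_diff) (auto intro!: smooth_diff smooth_pd sm poly2_diff simp: pd_poly2 s1)
    qed
    then show ?thesis using pz[of y] pz[of 0] unfolding B_def by simp
  qed
  have Csym: "C i k = C k i" for i k unfolding C_def using schwarz[OF sm] by simp
  define q where "q = poly2 (f 0) B (\<lambda>j k. C j k / 2)"
  have "(\<lambda>y. f y - q y) x = (\<lambda>y. f y - q y) 0"
  proof (rule grad0_const)
    show "(\<lambda>y. f y - q y) differentiable (at x)" for x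
      unfolding q_def by (intro differentiable_diff smooth_diff sm poly2_diff)
    show "pd d (\<lambda>y. f y - q y) x = 0" for d x
    proof -
      have "pd d (\<lambda>y. f y - q y) x = pd d f x - pd d q x"
        unfolding q_def by (rule pd_diff) (auto intro!: smooth_diff sm poly2_diff)
      also have "\<dots> = (\<Sum>j\<in>UNIV. C j d * x $ j) - (\<Sum>k\<in>UNIV. C d k / 2 * x $ k) - (\<Sum>j\<in>UNIV. C j d / 2 * x $ j)"
        unfolding q_def pd_poly2 s2 by simp
      also have "\<dots> = 0"
      proof -
        have a: "(\<Sum>k\<in>UNIV. C d k / 2 * x $ k) = (\<Sum>j\<in>UNIV. C j d / 2 * x $ j)"
          by (rule sum.cong) (auto simp: Csym[of d])
        have b: "(\<Sum>j\<in>UNIV. C j d / 2 * x $ j) = (\<Sum>j\<in>UNIV. C j d * x $ j) / 2"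
          by (simp add: sum_divide_distrib)
        show ?thesis using a b by linarith
      qed
      finally show ?thesis .
    qed
  qed
  then show ?thesis unfolding q_def C_def B_def by (simp add: poly2_0)
qed

lemma D3_zero:
  fixes D :: "idx \<Rightarrow> idx \<Rightarrow> idx \<Rightarrow> idx \<Rightarrow> idx \<Rightarrow> real"
  assumes s1: "\<And>b c d e f. D b c d e f = D c b d e f"
    and s2: "\<And>b c d e f. D b c d e f = D b c e d f"
    and s3: "\<And>b c d e f. D b c d e f = D b c d f e"
    and k: "\<And>b c d e f. D b c d e f + D c d b e f + D d b c e f = 0"
  shows "D b c d e f = 0"
proof -
  have r1: "D b c e d f = D b c d e f" using s2[of b c e d f] by linarith
  have r2: "D b c f d e = D b c d e f" using s3[of b c d f e] s2[of b c f d e] by linarith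
  have r3: "D b d e c f = D b d c e f" using s2[of b d e c f] by linarith
  have r4: "D b d f c e = D b d c e f" using s3[of b d c f e] s2[of b d f c e] by linarith
  have r5: "D b e f c d = D b e c d f" using s3[of b e c f d] s2[of b e f c d] by linarith
  have r7: "D c d e b f = D c d b e f" using s2[of c d e b f] by linarith
  have r8: "D c d f b e = D c d b e f" using s3[of c d b f e] s2[of c d f b e] by linarith
  have r10: "D c e f b d = D c e b d f" using s3[of c e b f d] s2[of c e f b d] by linarith
  have r12: "D d b c e f = D b d c e f" using s1[of d b c e f] by linarith
  have r14: "D d e c b f = D d e b c f" using s2[of d e c b f] by linarith
  have r15: "D d e f b c = D d e b c f" using s3[of d e b f c] s2[of d e f b c] by linarith
  have r17: "D d f c b e = D d f b c e" using s2[of d f c b e] by linarith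
  have r18: "D e b c d f = D b e c d f" using s1[of e b c d f] by linarith
  have r19: "D e b d c f = D b e c d f" using s2[of b e d c f] s1[of e b d c f] by linarith
  have r20: "D e c d b f = D c e b d f" using s2[of c e d b f] s1[of e c d b f] by linarith
  have r22: "D e f c b d = D e f b c d" using s2[of e f c b d] by linarith
  have r23: "D e f d b c = D e f b c d" using s3[of e f b d c] s2[of e f d b c] by linarith
  have r24: "D f b c d e = D b f c d e" using s1[of f b c d e] by linarith
  have r25: "D f b d c e = D b f c d e" using s2[of b f d c e] s1[of f b d c e] by linarith
  have r26: "D f b e c d = D b f c d e" using s3[of b f c e d] s2[of b f e c d] s1[of f b e c d] by linarith
  have r27: "D f c d b e = D c f b d e" using s2[of c f d b e] s1[of f c d b e] by linarith
  have r28: "D f c e b d = D c f b d e" using s3[of c f b e d] s2[of c f e b d] s1[of f c e b d] by linarith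
  have r29: "D f d e b c = D d f b c e" using s3[of d f b e c] s2[of d f e b c] s1[of f d e b c] by linarith
  show ?thesis using k[of b c d e f] k[of b c e d f] k[of b c f d e] k[of b d e c f] k[of b d f c e] k[of b e f c d] k[of c d e b f] k[of c d f b e] k[of c e f b d] k[of d e f b c]
    by (simp only: r1 r2 r3 r4 r5 r7 r8 r10 r12 r14 r15 r17 r18 r19 r20 r22 r23 r24 r25 r26 r27 r28 r29; linarith)
qed

definition Am :: "(idx \<Rightarrow> idx \<Rightarrow> idx \<Rightarrow> idx \<Rightarrow> real) \<Rightarrow> idx \<Rightarrow> idx \<Rightarrow> idx \<Rightarrow> idx \<Rightarrow> real" where
  "Am P a b c d = 2/3 * P a b c d + P a c b d - 1/3 * P a c d b + 1/3 * P c a b d - 1/3 * P c a d b"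

definition M1 :: "(idx \<Rightarrow> idx \<Rightarrow> idx \<Rightarrow> idx \<Rightarrow> real) \<Rightarrow> idx \<Rightarrow> idx \<Rightarrow> idx \<Rightarrow> idx \<Rightarrow> real" where
  "M1 P a b c d = (Am P a b c d - Am P b a c d - Am P a b d c + Am P b a d c) / 4"

lemma M1_anti1: "M1 P a b c d = - M1 P b a c d" unfolding M1_def by (simp add: field_simps)
lemma M1_anti2: "M1 P a b c d = - M1 P a b d c" unfolding M1_def by (simp add: field_simps)

lemma IP:
  fixes P :: "idx \<Rightarrow> idx \<Rightarrow> idx \<Rightarrow> idx \<Rightarrow> real"
  assumes sym: "\<And>a b c d. P a b c d = P a c b d"
    and cyc: "\<And>a b c d. P a b c d + P b c a d + P c a b d = 0"
    and kil: "\<And>a b c d. P a b c d + P a c d b + P a d b c = 0"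
  shows "(M1 P a b c d + M1 P a c b d) / 2 = P a b c d"
proof -
  have c2: "P a c b d = P a b c d" using sym[of a c b d] by linarith
  have c4: "P a d b c = P a b d c" using sym[of a d b c] by linarith
  have c5: "P a d c b = P a c d b" using sym[of a d c b] by linarith
  have c8: "P b c a d = P b a c d" using sym[of b c a d] by linarith
  have c10: "P b d a c = P b a d c" using sym[of b d a c] by linarith
  have c11: "P b d c a = P b c d a" using sym[of b d c a] by linarith
  have c14: "P c b a d = P c a b d" using sym[of c b a d] by linarith
  have c16: "P c d a b = P c a d b" using sym[of c d a b] by linarith
  have c17: "P c d b a = P c b d a" using sym[of c d b a] by linarith
  have c20: "P d b a c = P d a b c" using sym[of d b a c] by linarith
  have c22: "P d c a b = P d a c b" using sym[of d c a b] by linarith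
  have c23: "P d c b a = P d b c a" using sym[of d c b a] by linarith
  have j0: "P a b c d + P b a c d + P c a b d = 0" using cyc[of a b c d] c8 by linarith
  have j1: "P a b c d + P a b d c + P a c d b = 0" using kil[of a b c d] c4 by linarith
  have j2: "P a b d c + P b a d c + P d a b c = 0" using cyc[of a b d c] c10 by linarith
  have j3: "P a c d b + P c a d b + P d a c b = 0" using cyc[of a c d b] c16 by linarith
  have j4: "P b a c d + P b a d c + P b c d a = 0" using kil[of b a c d] c10 by linarith
  have j5: "P b c d a + P c b d a + P d b c a = 0" using cyc[of b c d a] c17 by linarith
  have j6: "P c a b d + P c a d b + P c b d a = 0" using kil[of c a b d] c16 by linarith
  have "(M1 P a b c d + M1 P a c b d) / 2 = P a b c d + ((-1/3) * (P a b c d + P b a c d + P c a b d) + (-1/4) * (P a b c d + P a b d c + P a c d b) + (1/24) * (P a b d c + P b a d c + P d a b c) + (1/24) * (P a c d b + P c a d b + P d a c b) + (1/8) * (P b a c d + P b a d c + P b c d a) + (-1/12) * (P b c d a + P c b d a + P d b c a) + (1/8) * (P c a b d + P c a d b + P c b d a))"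
    unfolding M1_def Am_def by (simp only: c2 c4 c5 c8 c10 c11 c14 c16 c17 c20 c22 c23) (simp add: field_simps)
  then show ?thesis by (simp only: j0 j1 j2 j3 j4 j5 j6; simp)
qed

definition Gq :: "(idx \<Rightarrow> idx \<Rightarrow> idx \<Rightarrow> idx \<Rightarrow> idx \<Rightarrow> real) \<Rightarrow> idx \<Rightarrow> idx \<Rightarrow> idx \<Rightarrow> idx \<Rightarrow> idx \<Rightarrow> real" where
  "Gq Q i0 i1 i2 i3 i4 = 8 * Q i0 i1 i3 i2 i4 - 4 * Q i0 i1 i2 i3 i4 + 2 * Q i0 i3 i1 i2 i4 - 4 * Q i0 i3 i1 i4 i2 - 4 * Q i0 i1 i3 i4 i2"

definition Ga :: "(idx \<Rightarrow> idx \<Rightarrow> idx \<Rightarrow> idx \<Rightarrow> idx \<Rightarrow> real) \<Rightarrow> idx \<Rightarrow> idx \<Rightarrow> idx \<Rightarrow> idx \<Rightarrow> idx \<Rightarrow> real" where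
  "Ga Q a b e c d = Gq Q a b e c d - Gq Q a b e d c"

definition Rq :: "(idx \<Rightarrow> idx \<Rightarrow> idx \<Rightarrow> idx \<Rightarrow> idx \<Rightarrow> real) \<Rightarrow> idx \<Rightarrow> idx \<Rightarrow> idx \<Rightarrow> idx \<Rightarrow> idx \<Rightarrow> real" where
  "Rq Q a b e c d = (Ga Q a b e c d - Ga Q b a e c d - Ga Q a e b c d - Ga Q e b a c d + Ga Q b e a c d + Ga Q e a b c d) / 12"

lemma Rq_anti1: "Rq Q a b e c d = - Rq Q b a e c d" unfolding Rq_def by (simp add: field_simps)
lemma Rq_anti2: "Rq Q a b e c d = - Rq Q a e b c d" unfolding Rq_def by (simp add: field_simps)
lemma Rq_anti3: "Rq Q a b e c d = - Rq Q a b e d c" unfolding Rq_def Ga_def by (simp add: field_simps)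

lemma IQ:
  fixes Q :: "idx \<Rightarrow> idx \<Rightarrow> idx \<Rightarrow> idx \<Rightarrow> idx \<Rightarrow> real"
  assumes s1: "\<And>a b c d e. Q a b c d e = Q a c b d e"
    and s2: "\<And>a b c d e. Q a b c d e = Q a b c e d"
    and cyc: "\<And>a b c d e. Q a b c d e + Q b c a d e + Q c a b d e = 0"
    and kil: "\<And>a b c d e. Q a b c d e + Q a c d b e + Q a d b c e = 0"
  shows "(Rq Q a b e c d + Rq Q a b d c e + Rq Q a c e b d + Rq Q a c d b e) / 4 = Q a b c d e"
proof -
  have c1: "Q a b c e d = Q a b c d e" using s2[of a b c e d] by linarith
  have c3: "Q a b d e c = Q a b d c e" using s2[of a b d e c] by linarith
  have c5: "Q a c b d e = Q a b c d e" using s1[of a c b d e] by linarith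
  have c6: "Q a c b e d = Q a b c d e" using s2[of a b c e d] s1[of a c b e d] by linarith
  have c8: "Q a c d e b = Q a c d b e" using s2[of a c d e b] by linarith
  have c10: "Q a d b c e = Q a b d c e" using s1[of a d b c e] by linarith
  have c11: "Q a d b e c = Q a b d c e" using s2[of a b d e c] s1[of a d b e c] by linarith
  have c12: "Q a d c e b = Q a c d b e" using s2[of a c d e b] s1[of a d c e b] by linarith
  have c14: "Q a d e c b = Q a d e b c" using s2[of a d e c b] by linarith
  have c15: "Q a e b c d = Q a b e c d" using s1[of a e b c d] by linarith
  have c16: "Q a e b d c = Q a b e c d" using s2[of a b e d c] s1[of a e b d c] by linarith
  have c17: "Q a e c d b = Q a c e b d" using s2[of a c e d b] s1[of a e c d b] by linarith
  have c18: "Q a e d b c = Q a d e b c" using s1[of a e d b c] by linarith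
  have c19: "Q a e d c b = Q a d e b c" using s2[of a d e c b] s1[of a e d c b] by linarith
  have c21: "Q b a c e d = Q b a c d e" using s2[of b a c e d] by linarith
  have c22: "Q b a d e c = Q b a d c e" using s2[of b a d e c] by linarith
  have c23: "Q b a e d c = Q b a e c d" using s2[of b a e d c] by linarith
  have c24: "Q b c a d e = Q b a c d e" using s1[of b c a d e] by linarith
  have c25: "Q b c a e d = Q b a c d e" using s2[of b a c e d] s1[of b c a e d] by linarith
  have c27: "Q b c d e a = Q b c d a e" using s2[of b c d e a] by linarith
  have c29: "Q b c e d a = Q b c e a d" using s2[of b c e d a] by linarith
  have c30: "Q b d a c e = Q b a d c e" using s1[of b d a c e] by linarith
  have c31: "Q b d a e c = Q b a d c e" using s2[of b a d e c] s1[of b d a e c] by linarith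
  have c32: "Q b d c a e = Q b c d a e" using s1[of b d c a e] by linarith
  have c33: "Q b d c e a = Q b c d a e" using s2[of b c d e a] s1[of b d c e a] by linarith
  have c35: "Q b d e c a = Q b d e a c" using s2[of b d e c a] by linarith
  have c36: "Q b e a c d = Q b a e c d" using s1[of b e a c d] by linarith
  have c37: "Q b e a d c = Q b a e c d" using s2[of b a e d c] s1[of b e a d c] by linarith
  have c38: "Q b e c a d = Q b c e a d" using s1[of b e c a d] by linarith
  have c39: "Q b e c d a = Q b c e a d" using s2[of b c e d a] s1[of b e c d a] by linarith
  have c40: "Q b e d a c = Q b d e a c" using s1[of b e d a c] by linarith
  have c41: "Q b e d c a = Q b d e a c" using s2[of b d e c a] s1[of b e d c a] by linarith
  have c43: "Q c a b e d = Q c a b d e" using s2[of c a b e d] by linarith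
  have c44: "Q c a d e b = Q c a d b e" using s2[of c a d e b] by linarith
  have c45: "Q c a e d b = Q c a e b d" using s2[of c a e d b] by linarith
  have c46: "Q c b a d e = Q c a b d e" using s1[of c b a d e] by linarith
  have c47: "Q c b a e d = Q c a b d e" using s2[of c a b e d] s1[of c b a e d] by linarith
  have c49: "Q c b d e a = Q c b d a e" using s2[of c b d e a] by linarith
  have c51: "Q c b e d a = Q c b e a d" using s2[of c b e d a] by linarith
  have c52: "Q c d a b e = Q c a d b e" using s1[of c d a b e] by linarith
  have c53: "Q c d a e b = Q c a d b e" using s2[of c a d e b] s1[of c d a e b] by linarith
  have c54: "Q c d b a e = Q c b d a e" using s1[of c d b a e] by linarith
  have c55: "Q c d b e a = Q c b d a e" using s2[of c b d e a] s1[of c d b e a] by linarith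
  have c57: "Q c d e b a = Q c d e a b" using s2[of c d e b a] by linarith
  have c58: "Q c e a b d = Q c a e b d" using s1[of c e a b d] by linarith
  have c59: "Q c e a d b = Q c a e b d" using s2[of c a e d b] s1[of c e a d b] by linarith
  have c60: "Q c e b a d = Q c b e a d" using s1[of c e b a d] by linarith
  have c61: "Q c e b d a = Q c b e a d" using s2[of c b e d a] s1[of c e b d a] by linarith
  have c62: "Q c e d a b = Q c d e a b" using s1[of c e d a b] by linarith
  have c63: "Q c e d b a = Q c d e a b" using s2[of c d e b a] s1[of c e d b a] by linarith
  have c67: "Q d a e c b = Q d a e b c" using s2[of d a e c b] by linarith
  have c68: "Q d b a c e = Q d a b c e" using s1[of d b a c e] by linarith
  have c69: "Q d b a e c = Q d a b c e" using s2[of d a b e c] s1[of d b a e c] by linarith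
  have c71: "Q d b c e a = Q d b c a e" using s2[of d b c e a] by linarith
  have c73: "Q d b e c a = Q d b e a c" using s2[of d b e c a] by linarith
  have c74: "Q d c a b e = Q d a c b e" using s1[of d c a b e] by linarith
  have c75: "Q d c a e b = Q d a c b e" using s2[of d a c e b] s1[of d c a e b] by linarith
  have c76: "Q d c b a e = Q d b c a e" using s1[of d c b a e] by linarith
  have c77: "Q d c b e a = Q d b c a e" using s2[of d b c e a] s1[of d c b e a] by linarith
  have c79: "Q d c e b a = Q d c e a b" using s2[of d c e b a] by linarith
  have c80: "Q d e a b c = Q d a e b c" using s1[of d e a b c] by linarith
  have c81: "Q d e a c b = Q d a e b c" using s2[of d a e c b] s1[of d e a c b] by linarith
  have c82: "Q d e b a c = Q d b e a c" using s1[of d e b a c] by linarith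
  have c83: "Q d e b c a = Q d b e a c" using s2[of d b e c a] s1[of d e b c a] by linarith
  have c84: "Q d e c a b = Q d c e a b" using s1[of d e c a b] by linarith
  have c85: "Q d e c b a = Q d c e a b" using s2[of d c e b a] s1[of d e c b a] by linarith
  have c89: "Q e a d c b = Q e a d b c" using s2[of e a d c b] by linarith
  have c90: "Q e b a c d = Q e a b c d" using s1[of e b a c d] by linarith
  have c91: "Q e b a d c = Q e a b c d" using s2[of e a b d c] s1[of e b a d c] by linarith
  have c93: "Q e b c d a = Q e b c a d" using s2[of e b c d a] by linarith
  have c95: "Q e b d c a = Q e b d a c" using s2[of e b d c a] by linarith
  have c96: "Q e c a b d = Q e a c b d" using s1[of e c a b d] by linarith
  have c97: "Q e c a d b = Q e a c b d" using s2[of e a c d b] s1[of e c a d b] by linarith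
  have c98: "Q e c b a d = Q e b c a d" using s1[of e c b a d] by linarith
  have c99: "Q e c b d a = Q e b c a d" using s2[of e b c d a] s1[of e c b d a] by linarith
  have c101: "Q e c d b a = Q e c d a b" using s2[of e c d b a] by linarith
  have c102: "Q e d a b c = Q e a d b c" using s1[of e d a b c] by linarith
  have c103: "Q e d a c b = Q e a d b c" using s2[of e a d c b] s1[of e d a c b] by linarith
  have c104: "Q e d b a c = Q e b d a c" using s1[of e d b a c] by linarith
  have c105: "Q e d b c a = Q e b d a c" using s2[of e b d c a] s1[of e d b c a] by linarith
  have c106: "Q e d c a b = Q e c d a b" using s1[of e d c a b] by linarith
  have c107: "Q e d c b a = Q e c d a b" using s2[of e c d b a] s1[of e d c b a] by linarith
  have j0: "Q a b c d e + Q b a c d e + Q c a b d e = 0" using cyc[of a b c d e] c24 by linarith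
  have j1: "Q a b c d e + Q a b d c e + Q a c d b e = 0" using kil[of a b c d e] c10 by linarith
  have j2: "Q a b c d e + Q a b e c d + Q a c e b d = 0" using kil[of a b c e d] c1 c15 by linarith
  have j3: "Q a b d c e + Q b a d c e + Q d a b c e = 0" using cyc[of a b d c e] c30 by linarith
  have j4: "Q a b d c e + Q a b e c d + Q a d e b c = 0" using kil[of a b d e c] c3 c16 by linarith
  have j5: "Q a b e c d + Q b a e c d + Q e a b c d = 0" using cyc[of a b e c d] c36 by linarith
  have j6: "Q a c d b e + Q c a d b e + Q d a c b e = 0" using cyc[of a c d b e] c52 by linarith
  have j7: "Q a c e b d + Q c a e b d + Q e a c b d = 0" using cyc[of a c e b d] c58 by linarith
  have j8: "Q a c d b e + Q a c e b d + Q a d e b c = 0" using kil[of a c d e b] c8 c14 c17 by linarith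
  have j9: "Q b a c d e + Q b a d c e + Q b c d a e = 0" using kil[of b a c d e] c30 by linarith
  have j10: "Q b a c d e + Q b a e c d + Q b c e a d = 0" using kil[of b a c e d] c21 c36 by linarith
  have j11: "Q b a d c e + Q b a e c d + Q b d e a c = 0" using kil[of b a d e c] c22 c37 by linarith
  have j12: "Q b c d a e + Q c b d a e + Q d b c a e = 0" using cyc[of b c d a e] c54 by linarith
  have j13: "Q a d e b c + Q d a e b c + Q e a d b c = 0" using cyc[of a d e b c] c80 by linarith
  have j14: "Q b c e a d + Q c b e a d + Q e b c a d = 0" using cyc[of b c e a d] c60 by linarith
  have j15: "Q c a d b e + Q c a e b d + Q c d e a b = 0" using kil[of c a d e b] c44 c59 by linarith
  have j16: "Q b d e a c + Q d b e a c + Q e b d a c = 0" using cyc[of b d e a c] c82 by linarith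
  have j17: "Q c a b d e + Q c a d b e + Q c b d a e = 0" using kil[of c a b d e] c52 by linarith
  have j18: "Q c d e a b + Q d c e a b + Q e c d a b = 0" using cyc[of c d e a b] c84 by linarith
  have j19: "Q c a b d e + Q c a e b d + Q c b e a d = 0" using kil[of c a b e d] c43 c58 by linarith
  have "(Rq Q a b e c d + Rq Q a b d c e + Rq Q a c e b d + Rq Q a c d b e) / 4 = Q a b c d e + ((-1/3) * (Q a b c d e + Q b a c d e + Q c a b d e) + (-1/4) * (Q a b c d e + Q a b d c e + Q a c d b e) + (-1/4) * (Q a b c d e + Q a b e c d + Q a c e b d) + (1/24) * (Q a b d c e + Q b a d c e + Q d a b c e) + (1/8) * (Q a b d c e + Q a b e c d + Q a d e b c) + (1/24) * (Q a b e c d + Q b a e c d + Q e a b c d) + (1/24) * (Q a c d b e + Q c a d b e + Q d a c b e) + (1/24) * (Q a c e b d + Q c a e b d + Q e a c b d) + (1/8) * (Q a c d b e + Q a c e b d + Q a d e b c) + (1/8) * (Q b a c d e + Q b a d c e + Q b c d a e) + (1/8) * (Q b a c d e + Q b a e c d + Q b c e a d) + (-1/8) * (Q b a d c e + Q b a e c d + Q b d e a c) + (-1/12) * (Q b c d a e + Q c b d a e + Q d b c a e) + (-1/12) * (Q a d e b c + Q d a e b c + Q e a d b c) + (-1/12) * (Q b c e a d + Q c b e a d + Q e b c a d) + (-1/8) * (Q c a d b e + Q c a e b d + Q c d e a b) + (1/24) * (Q b d e a c + Q d b e a c + Q e b d a c) + (1/8) * (Q c a b d e + Q c a d b e + Q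 c b d a e) + (1/24) * (Q c d e a b + Q d c e a b + Q e c d a b) + (1/8) * (Q c a b d e + Q c a e b d + Q c b e a d))"
    unfolding Rq_def Ga_def Gq_def by (simp only: c1 c3 c5 c6 c8 c10 c11 c12 c14 c15 c16 c17 c18 c19 c21 c22 c23 c24 c25 c27 c29 c30 c31 c32 c33 c35 c36 c37 c38 c39 c40 c41 c43 c44 c45 c46 c47 c49 c51 c52 c53 c54 c55 c57 c58 c59 c60 c61 c62 c63 c67 c68 c69 c71 c73 c74 c75 c76 c77 c79 c80 c81 c82 c83 c84 c85 c89 c90 c91 c93 c95 c96 c97 c98 c99 c101 c102 c103 c104 c105 c106 c107) (simp add: field_simps)
  then show ?thesis by (simp only: j0 j1 j2 j3 j4 j5 j6 j7 j8 j9 j10 j11 j12 j13 j14 j15 j16 j17 j18 j19; simp)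
qed

lemma pd_poly2_fun: "pd d (poly2 a b c) = poly2 (b d) (\<lambda>k. c d k + c k d) (\<lambda>_ _. 0)"
proof
  fix y
  have 1: "pd d (poly2 a b c) y = b d + (\<Sum>k\<in>UNIV. c d k * y $ k) + (\<Sum>j\<in>UNIV. c j d * y $ j)" by (rule pd_poly2)
  have 2: "poly2 (b d) (\<lambda>k. c d k + c k d) (\<lambda>_ _. 0) y = b d + (\<Sum>k\<in>UNIV. (c d k + c k d) * y $ k)"
    by (simp add: poly2_def)
  have 3: "(\<Sum>k\<in>UNIV. (c d k + c k d) * y $ k) = (\<Sum>k\<in>UNIV. c d k * y $ k) + (\<Sum>k\<in>UNIV. c k d * y $ k)"
    by (simp only: distrib_right sum.distrib)
  show "pd d (poly2 a b c) y = poly2 (b d) (\<lambda>k. c d k + c k d) (\<lambda>_ _. 0) y" using 1 2 3 by linarith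
qed

lemma iter_pd_poly2: "\<exists>a' b' c'. iter_pd ds (poly2 a b c) = poly2 a' b' c'"
proof (induction ds)
  case Nil then show ?case by (auto simp: iter_pd_def)
next
  case (Cons d ds)
  then obtain a' b' c' where "iter_pd ds (poly2 a b c) = poly2 a' b' c'" by blast
  then have "iter_pd (d # ds) (poly2 a b c) = pd d (poly2 a' b' c')" by (simp add: iter_pd_def)
  then show ?case using pd_poly2_fun by auto
qed

lemma smooth_poly2: "smooth_fun (poly2 a b c)"
  unfolding smooth_fun_def
proof (intro allI)
  fix ds x
  obtain a' b' c' where "iter_pd ds (poly2 a b c) = poly2 a' b' c'" using iter_pd_poly2 by blast
  then show "iter_pd ds (poly2 a b c) differentiable (at x)" by (simp add: poly2_diff)
qed

lemma lin_poly2: "(\<lambda>x. \<Sum>e\<in>UNIV. B e * x $ e) = poly2 0 B (\<lambda>_ _. 0)"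
  by (rule ext) (simp add: poly2_def)

lemma const_poly2: "(\<lambda>x. k) = poly2 k (\<lambda>_. 0) (\<lambda>_ _. 0)"
  by (rule ext) (simp add: poly2_def)

lemma pd_lin: "pd d (\<lambda>x. \<Sum>e\<in>UNIV. B e * x $ e) y = B d"
  by (simp add: lin_poly2 pd_poly2)

lemma smooth_lin: "smooth_fun (\<lambda>x. \<Sum>e\<in>UNIV. B e * x $ e)"
  by (simp add: lin_poly2 smooth_poly2)

lemma smooth_const: "smooth_fun (\<lambda>x. k)"
  by (subst const_poly2) (rule smooth_poly2)

lemma KY_const:
  assumes "\<And>a b. A a b = - A b a"
  shows "killing_yano (\<lambda>x a b. A a b)"
  unfolding killing_yano_def smooth2_def
  by (intro conjI allI smooth_const assms) (simp add: pd_const)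

lemma KY_lin:
  assumes a1: "\<And>a b e. B a b e = - B b a e" and a2: "\<And>a b e. B a b e = - B a e b"
  shows "killing_yano (\<lambda>x a b. \<Sum>e\<in>UNIV. B a b e * x $ e)"
  unfolding killing_yano_def smooth2_def
proof (intro conjI allI)
  fix a b show "smooth_fun (\<lambda>x. \<Sum>e\<in>UNIV. B a b e * x $ e)" by (rule smooth_lin)
next
  fix x :: point and a b
  show "(\<Sum>e\<in>UNIV. B a b e * x $ e) = - (\<Sum>e\<in>UNIV. B b a e * x $ e)"
  proof -
    have "(\<Sum>e\<in>UNIV. B a b e * x $ e) = (\<Sum>e\<in>UNIV. - (B b a e * x $ e))"
      by (rule sum.cong) (auto simp: a1[of a b])
    also have "\<dots> = - (\<Sum>e\<in>UNIV. B b a e * x $ e)" by (rule sum_negf)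
    finally show ?thesis .
  qed
next
  fix x :: point and a b c
  have "B b c a + B a c b = 0" using a1[of b c a] a2[of c b a] a2[of a c b] a1[of a b c] a2[of b a c] by linarith
  then show "(pd a (\<lambda>y. \<Sum>e\<in>UNIV. B b c e * y $ e) x + pd b (\<lambda>y. \<Sum>e\<in>UNIV. B a c e * y $ e) x) / 2 = 0"
    by (simp add: pd_lin)
qed

lemma KV_const: "killing_vector (\<lambda>x g. v g)"
  unfolding killing_vector_def smooth1_def by (simp add: smooth_const pd_const)

definition vrc :: "idx \<Rightarrow> idx \<Rightarrow> idx \<Rightarrow> idx \<Rightarrow> real" where
  "vrc r s g k = (if g = r \<and> k = s then 1 else 0) - (if g = s \<and> k = r then 1 else 0)"

definition VR :: "idx \<Rightarrow> idx \<Rightarrow> point \<Rightarrow> idx \<Rightarrow> real" where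
  "VR r s x g = (\<Sum>k\<in>UNIV. vrc r s g k * x $ k)"

lemma KV_rot: "killing_vector (VR r s)"
  unfolding killing_vector_def smooth1_def VR_def
proof (intro conjI allI)
  fix a show "smooth_fun (\<lambda>x. \<Sum>k\<in>UNIV. vrc r s a k * x $ k)" by (rule smooth_lin)
next
  fix x :: point and a b
  show "(pd a (\<lambda>y. \<Sum>k\<in>UNIV. vrc r s b k * y $ k) x + pd b (\<lambda>y. \<Sum>k\<in>UNIV. vrc r s a k * y $ k) x) / 2 = 0"
  proof -
    have "vrc r s b a = - vrc r s a b" unfolding vrc_def by (simp add: conj_commute)
    then show ?thesis unfolding pd_lin by simp
  qed
qed

lemma sum_if_conj: "(\<Sum>k\<in>UNIV. if P \<and> k = s then f k else (0::real)) = (if P then f (s::idx) else 0)"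
  by (cases P) auto

lemma VR_eq: "VR r s x g = (if g = r then x $ s else 0) - (if g = s then x $ r else 0)"
proof -
  have "(\<Sum>k\<in>UNIV. vrc r s g k * x $ k) = (\<Sum>k\<in>UNIV. (if g = r \<and> k = s then x $ k else 0)) - (\<Sum>k\<in>UNIV. (if g = s \<and> k = r then x $ k else 0))"
    unfolding vrc_def left_diff_distrib sum_subtractf
    by (intro arg_cong2[where f="(-)"] sum.cong) auto
  then show ?thesis unfolding VR_def by (simp only: sum_if_conj)
qed

definition rep :: "(point \<Rightarrow> idx \<Rightarrow> idx \<Rightarrow> idx \<Rightarrow> real) \<Rightarrow> bool" where
  "rep S \<longleftrightarrow> (\<exists>(m::nat) (c::nat \<Rightarrow> real) (X::nat \<Rightarrow> point \<Rightarrow> idx \<Rightarrow> idx \<Rightarrow> real)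
            (\<xi>::nat \<Rightarrow> point \<Rightarrow> idx \<Rightarrow> real).
           (\<forall>i<m. killing_yano (X i) \<and> killing_vector (\<xi> i)) \<and>
           (\<forall>x a b g. S x a b g =
              (\<Sum>i<m. c i * ((X i x a b * \<xi> i x g + X i x a g * \<xi> i x b) / 2))))"

lemma rep_zero: "rep (\<lambda>x a b g. 0)"
  unfolding rep_def by (rule exI[of _ 0]) simp

lemma rep_snoc:
  assumes "rep S" "killing_yano X'" "killing_vector \<xi>'"
  shows "rep (\<lambda>x a b g. S x a b g + k * ((X' x a b * \<xi>' x g + X' x a g * \<xi>' x b) / 2))"
proof -
  obtain m :: nat and c X \<xi> where h: "\<forall>i<m. killing_yano (X i) \<and> killing_vector (\<xi> i)"
    "\<forall>x a b g. S x a b g = (\<Sum>i<m. c i * ((X i x a b * \<xi> i x g + X i x a g * \<xi> i x b) / 2))"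
    using assms(1) unfolding rep_def by (elim exE conjE) (rule that; assumption)
  have sm: "(\<Sum>i<m. (c(m := k)) i * (((X(m := X')) i x a b * (\<xi>(m := \<xi>')) i x g + (X(m := X')) i x a g * (\<xi>(m := \<xi>')) i x b) / 2))
     = (\<Sum>i<m. c i * ((X i x a b * \<xi> i x g + X i x a g * \<xi> i x b) / 2))" for x a b g
    by (rule sum.cong) auto
  show ?thesis unfolding rep_def
    apply (rule exI[of _ "Suc m"], rule exI[of _ "c(m:=k)"], rule exI[of _ "X(m:=X')"], rule exI[of _ "\<xi>(m:=\<xi>')"])
    using h assms(2,3) sm by (auto simp: less_Suc_eq sum.lessThan_Suc)
qed

lemma rep_add_aux:
  fixes n :: nat
  assumes "rep S" "\<forall>i<n. killing_yano (X2 i) \<and> killing_vector (\<xi>2 i)"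
  shows "rep (\<lambda>x a b g. S x a b g + (\<Sum>i<n. c2 i * ((X2 i x a b * \<xi>2 i x g + X2 i x a g * \<xi>2 i x b) / 2)))"
  using assms(2)
proof (induction n)
  case 0 then show ?case using assms(1) by simp
next
  case (Suc n)
  then have "rep (\<lambda>x a b g. S x a b g + (\<Sum>i<n. c2 i * ((X2 i x a b * \<xi>2 i x g + X2 i x a g * \<xi>2 i x b) / 2)))"
    by auto
  from rep_snoc[OF this, of "X2 n" "\<xi>2 n" "c2 n"] Suc.prems
  show ?case by (simp add: sum.lessThan_Suc add.assoc)
qed

lemma rep_add: "rep S1 \<Longrightarrow> rep S2 \<Longrightarrow> rep (\<lambda>x a b g. S1 x a b g + S2 x a b g)"
proof -
  assume r1: "rep S1" and r2: "rep S2"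
  obtain m :: nat and c X \<xi> where h: "\<forall>i<m. killing_yano (X i) \<and> killing_vector (\<xi> i)"
    "\<forall>x a b g. S2 x a b g = (\<Sum>i<m. c i * ((X i x a b * \<xi> i x g + X i x a g * \<xi> i x b) / 2))"
    using r2 unfolding rep_def by (elim exE conjE) (rule that; assumption)
  show ?thesis using rep_add_aux[OF r1 h(1), of c] h(2) by simp
qed

lemma rep_ext: "rep S \<Longrightarrow> (\<And>x a b g. S' x a b g = S x a b g) \<Longrightarrow> rep S'"
proof -
  assume "rep S" "\<And>x a b g. S' x a b g = S x a b g"
  then have "S' = S" by (intro ext) auto
  with \<open>rep S\<close> show ?thesis by simp
qed

lemma rep_sum:
  assumes "finite A" "\<And>i. i \<in> A \<Longrightarrow> rep (F i)"
  shows "rep (\<lambda>x a b g. \<Sum>i\<in>A. F i x a b g)"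
  using assms
proof (induction A rule: finite_induct)
  case empty then show ?case by (simp add: rep_zero)
next
  case (insert i A)
  then have "rep (\<lambda>x a b g. F i x a b g + (\<Sum>i\<in>A. F i x a b g))"
    by (intro rep_add) auto
  then show ?case using insert by simp
qed

lemma rep_basic:
  assumes "killing_yano X'" "killing_vector \<xi>'"
  shows "rep (\<lambda>x a b g. (X' x a b * \<xi>' x g + X' x a g * \<xi>' x b) / 2)"
  using rep_snoc[OF rep_zero assms, of 1] by simp

lemma if_div0 [simp]: "(if P then a else (0::real)) / c = (if P then a / c else 0)" by simp

lemma sum_if_eq_l: "(\<Sum>r\<in>UNIV. if g = r then f r else (0::real)) = f (g::idx)"
  by (simp add: sum.delta')

lemma sumVR:
  "(\<Sum>r\<in>UNIV. \<Sum>s\<in>UNIV. m r s * VR r s x g) = (\<Sum>s\<in>UNIV. m g s * x $ s) - (\<Sum>r\<in>UNIV. m r g * x $ r)"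
proof -
  have "(\<Sum>r\<in>UNIV. \<Sum>s\<in>UNIV. m r s * VR r s x g)
      = (\<Sum>r\<in>UNIV. \<Sum>s\<in>UNIV. (if g = r then m r s * x $ s else 0)) - (\<Sum>r\<in>UNIV. \<Sum>s\<in>UNIV. (if g = s then m r s * x $ r else 0))"
    by (simp add: VR_eq right_diff_distrib sum_subtractf)
  also have "(\<Sum>r\<in>UNIV. \<Sum>s\<in>UNIV. (if g = r then m r s * x $ s else 0)) = (\<Sum>s\<in>UNIV. m g s * x $ s)"
  proof -
    have "(\<Sum>s\<in>UNIV. (if g = r then m r s * x $ s else 0)) = (if g = r then (\<Sum>s\<in>UNIV. m r s * x $ s) else 0)" for r
      by (cases "g = r") auto
    then show ?thesis by (simp only: sum_if_eq_l)
  qed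
  also have "(\<Sum>r\<in>UNIV. \<Sum>s\<in>UNIV. (if g = s then m r s * x $ r else 0)) = (\<Sum>r\<in>UNIV. m r g * x $ r)"
    by (simp only: sum_if_eq_l)
  finally show ?thesis .
qed

lemma rep_const_part:
  assumes anti: "\<And>a b c. N0 a b c = - N0 b a c"
  shows "rep (\<lambda>x a b g. (N0 a b g + N0 a g b) / 2)"
proof -
  define F where "F r = (\<lambda>(x::point) a b g. ((\<lambda>x a b. N0 a b r) x a b * (\<lambda>x g. if r = g then 1 else 0) x g
        + (\<lambda>x a b. N0 a b r) x a g * (\<lambda>x g. if r = g then (1::real) else 0) x b) / 2)" for r
  have "rep (F r)" for r unfolding F_def
    by (rule rep_basic[OF KY_const KV_const]) (rule anti)
  then have "rep (\<lambda>x a b g. \<Sum>r\<in>UNIV. F r x a b g)" by (intro rep_sum) auto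
  then show ?thesis
  proof (rule rep_ext)
    fix x :: point and a b g
    have "(\<Sum>r\<in>UNIV. F r x a b g) = (\<Sum>r\<in>UNIV. (if r = g then N0 a b r else 0)) / 2 + (\<Sum>r\<in>UNIV. (if r = b then N0 a g r else 0)) / 2"
      unfolding F_def by (simp add: add_divide_distrib sum.distrib sum_divide_distrib cong: if_cong)
    then show "(N0 a b g + N0 a g b) / 2 = (\<Sum>r\<in>UNIV. F r x a b g)" by simp
  qed
qed

lemma half_sum: "(\<Sum>s\<in>UNIV. f s / 2 * (x::point) $ s) - (- (\<Sum>s\<in>UNIV. f s / 2 * x $ s)) = (\<Sum>s\<in>UNIV. f s * x $ s)"
proof -
  have "(\<Sum>s\<in>UNIV. f s / 2 * x $ s) = (\<Sum>s\<in>UNIV. f s * x $ s) / 2"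
    by (simp add: sum_divide_distrib)
  then show ?thesis by simp
qed

lemma sumVR_M1: "(\<Sum>r\<in>UNIV. \<Sum>s\<in>UNIV. M1 P a b r s / 2 * VR r s x g) = (\<Sum>s\<in>UNIV. M1 P a b g s * x $ s)"
proof -
  have "(\<Sum>r\<in>UNIV. M1 P a b r g / 2 * x $ r) = (\<Sum>r\<in>UNIV. - (M1 P a b g r / 2 * x $ r))"
    by (rule sum.cong) (auto simp: M1_anti2[of P a b _ g])
  also have "\<dots> = - (\<Sum>r\<in>UNIV. M1 P a b g r / 2 * x $ r)" by (rule sum_negf)
  finally have h: "(\<Sum>r\<in>UNIV. M1 P a b r g / 2 * x $ r) = - (\<Sum>r\<in>UNIV. M1 P a b g r / 2 * x $ r)" .
  show ?thesis unfolding sumVR h by (rule half_sum)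
qed

lemma sum2_half:
  "(\<Sum>r\<in>UNIV. \<Sum>s\<in>UNIV. (A r s + B r s) / 2) = ((\<Sum>r\<in>UNIV. \<Sum>s\<in>UNIV. A r s) + (\<Sum>r\<in>UNIV. \<Sum>s\<in>UNIV. (B r s :: real))) / 2"
  by (simp add: sum.distrib add_divide_distrib sum_divide_distrib)

lemma rep_lin_part:
  fixes P :: "idx \<Rightarrow> idx \<Rightarrow> idx \<Rightarrow> idx \<Rightarrow> real"
  assumes sym: "\<And>a b c d. P a b c d = P a c b d"
    and cyc: "\<And>a b c d. P a b c d + P b c a d + P c a b d = 0"
    and kil: "\<And>a b c d. P a b c d + P a c d b + P a d b c = 0"
  shows "rep (\<lambda>x a b g. \<Sum>j\<in>UNIV. P a b g j * x $ j)"
proof -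
  define F where "F r s = (\<lambda>(x::point) a b g. ((\<lambda>x a b. M1 P a b r s / 2) x a b * VR r s x g
        + (\<lambda>x a b. M1 P a b r s / 2) x a g * VR r s x b) / 2)" for r s
  have "rep (F r s)" for r s unfolding F_def
    by (rule rep_basic[OF KY_const KV_rot]) (subst M1_anti1, simp)
  then have "rep (\<lambda>x a b g. \<Sum>r\<in>UNIV. \<Sum>s\<in>UNIV. F r s x a b g)"
    by (intro rep_sum) auto
  then show ?thesis
  proof (rule rep_ext)
    fix x :: point and a b g
    have "(\<Sum>r\<in>UNIV. \<Sum>s\<in>UNIV. F r s x a b g) =
       ((\<Sum>r\<in>UNIV. \<Sum>s\<in>UNIV. M1 P a b r s / 2 * VR r s x g) + (\<Sum>r\<in>UNIV. \<Sum>s\<in>UNIV. M1 P a g r s / 2 * VR r s x b)) / 2"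
      unfolding F_def by (rule sum2_half)
    also have "\<dots> = ((\<Sum>s\<in>UNIV. M1 P a b g s * x $ s) + (\<Sum>s\<in>UNIV. M1 P a g b s * x $ s)) / 2"
      by (simp only: sumVR_M1)
    also have "\<dots> = (\<Sum>s\<in>UNIV. (M1 P a b g s + M1 P a g b s) / 2 * x $ s)"
      by (simp add: sum.distrib sum_divide_distrib distrib_right add_divide_distrib)
    also have "\<dots> = (\<Sum>s\<in>UNIV. P a b g s * x $ s)"
      using IP[OF sym cyc kil] by simp
    finally show "(\<Sum>j\<in>UNIV. P a b g j * x $ j) = (\<Sum>r\<in>UNIV. \<Sum>s\<in>UNIV. F r s x a b g)" by simp
  qed
qed

lemma swapsum: "(\<Sum>j\<in>UNIV. \<Sum>k\<in>UNIV. f k j * ((x::point) $ j * x $ k)) = (\<Sum>j\<in>UNIV. \<Sum>k\<in>UNIV. f j k * (x $ j * x $ k))"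
  by (subst sum.swap) (simp add: ac_simps)

definition WR :: "(idx \<Rightarrow> idx \<Rightarrow> idx \<Rightarrow> idx \<Rightarrow> idx \<Rightarrow> real) \<Rightarrow> point \<Rightarrow> idx \<Rightarrow> idx \<Rightarrow> idx \<Rightarrow> idx \<Rightarrow> real" where
  "WR Q x a b s t = (\<Sum>e\<in>UNIV. Rq Q a b e s t * x $ e)"

lemma sumVR_R: "(\<Sum>s\<in>UNIV. \<Sum>t\<in>UNIV. (\<Sum>e\<in>UNIV. Rq Q a b e s t / 2 * x $ e) * VR s t x g) = (\<Sum>t\<in>UNIV. WR Q x a b g t * x $ t)"
proof -
  have i: "(\<Sum>e\<in>UNIV. Rq Q a b e s t / 2 * x $ e) = WR Q x a b s t / 2" for s t
    unfolding WR_def by (simp add: sum_divide_distrib)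
  have an: "WR Q x a b s g = - WR Q x a b g s" for s
  proof -
    have "WR Q x a b s g = (\<Sum>e\<in>UNIV. - (Rq Q a b e g s * x $ e))"
      unfolding WR_def by (rule sum.cong) (auto simp: Rq_anti3[of Q a b _ s g])
    also have "\<dots> = - WR Q x a b g s" unfolding WR_def by (rule sum_negf)
    finally show ?thesis .
  qed
  have "(\<Sum>s\<in>UNIV. \<Sum>t\<in>UNIV. (\<Sum>e\<in>UNIV. Rq Q a b e s t / 2 * x $ e) * VR s t x g)
      = (\<Sum>s\<in>UNIV. \<Sum>t\<in>UNIV. WR Q x a b s t / 2 * VR s t x g)" by (simp only: i)
  also have "\<dots> = (\<Sum>t\<in>UNIV. WR Q x a b g t / 2 * x $ t) - (\<Sum>s\<in>UNIV. WR Q x a b s g / 2 * x $ s)"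
    by (rule sumVR)
  also have "(\<Sum>s\<in>UNIV. WR Q x a b s g / 2 * x $ s) = - (\<Sum>s\<in>UNIV. WR Q x a b g s / 2 * x $ s)"
    by (simp add: an sum_negf[symmetric])
  finally show ?thesis using half_sum[of "WR Q x a b g" x] by simp
qed

lemma rep_quad_part:
  fixes Q :: "idx \<Rightarrow> idx \<Rightarrow> idx \<Rightarrow> idx \<Rightarrow> idx \<Rightarrow> real"
  assumes s1: "\<And>a b c d e. Q a b c d e = Q a c b d e"
    and s2: "\<And>a b c d e. Q a b c d e = Q a b c e d"
    and cyc: "\<And>a b c d e. Q a b c d e + Q b c a d e + Q c a b d e = 0"
    and kil: "\<And>a b c d e. Q a b c d e + Q a c d b e + Q a d b c e = 0"
  shows "rep (\<lambda>x a b g. \<Sum>j\<in>UNIV. \<Sum>k\<in>UNIV. Q a b g j k * (x $ j * x $ k))"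
proof -
  define F where "F s t = (\<lambda>(x::point) a b g. ((\<lambda>x a b. \<Sum>e\<in>UNIV. Rq Q a b e s t / 2 * x $ e) x a b * VR s t x g
        + (\<lambda>x a b. \<Sum>e\<in>UNIV. Rq Q a b e s t / 2 * x $ e) x a g * VR s t x b) / 2)" for s t
  have "rep (F s t)" for s t unfolding F_def
  proof (rule rep_basic[OF KY_lin KV_rot])
    show "Rq Q a b e s t / 2 = - (Rq Q b a e s t / 2)" for a b e by (subst Rq_anti1, simp)
    show "Rq Q a b e s t / 2 = - (Rq Q a e b s t / 2)" for a b e by (subst Rq_anti2, simp)
  qed
  then have "rep (\<lambda>x a b g. \<Sum>s\<in>UNIV. \<Sum>t\<in>UNIV. F s t x a b g)"
    by (intro rep_sum) auto
  then show ?thesis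
  proof (rule rep_ext)
    fix x :: point and a b g
    define S where "S b g = (\<Sum>j\<in>UNIV. \<Sum>k\<in>UNIV. Rq Q a b j g k * (x $ j * x $ k))" for b g
    have WS: "(\<Sum>t\<in>UNIV. WR Q x a b g t * x $ t) = S b g" for b g
    proof -
      have "(\<Sum>t\<in>UNIV. WR Q x a b g t * x $ t) = (\<Sum>t\<in>UNIV. \<Sum>j\<in>UNIV. Rq Q a b j g t * (x $ j * x $ t))"
        unfolding WR_def by (simp add: sum_distrib_right sum_distrib_left ac_simps)
      also have "\<dots> = S b g" unfolding S_def by (rule sum.swap)
      finally show ?thesis .
    qed
    have "(\<Sum>s\<in>UNIV. \<Sum>t\<in>UNIV. F s t x a b g) =
       ((\<Sum>s\<in>UNIV. \<Sum>t\<in>UNIV. (\<Sum>e\<in>UNIV. Rq Q a b e s t / 2 * x $ e) * VR s t x g) + (\<Sum>s\<in>UNIV. \<Sum>t\<in>UNIV. (\<Sum>e\<in>UNIV. Rq Q a g e s t / 2 * x $ e) * VR s t x b)) / 2"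
      unfolding F_def by (rule sum2_half)
    also have "\<dots> = (S b g + S g b) / 2" by (simp only: sumVR_R WS)
    finally have L: "(\<Sum>s\<in>UNIV. \<Sum>t\<in>UNIV. F s t x a b g) = (S b g + S g b) / 2" .
    have "(\<Sum>j\<in>UNIV. \<Sum>k\<in>UNIV. Q a b g j k * (x $ j * x $ k))
       = (\<Sum>j\<in>UNIV. \<Sum>k\<in>UNIV. (Rq Q a b k g j + Rq Q a b j g k + Rq Q a g k b j + Rq Q a g j b k) / 4 * (x $ j * x $ k))"
      using IQ[OF s1 s2 cyc kil] by simp
    also have "\<dots> = ((\<Sum>j\<in>UNIV. \<Sum>k\<in>UNIV. Rq Q a b k g j * (x $ j * x $ k)) + S b g
         + (\<Sum>j\<in>UNIV. \<Sum>k\<in>UNIV. Rq Q a g k b j * (x $ j * x $ k)) + S g b) / 4"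
      unfolding S_def by (simp add: sum.distrib sum_divide_distrib distrib_right add_divide_distrib)
    also have "\<dots> = (S b g + S g b) / 2"
      unfolding S_def swapsum[of "\<lambda>j k. Rq Q a b j g k"] swapsum[of "\<lambda>j k. Rq Q a g j b k"] by simp
    finally show "(\<Sum>j\<in>UNIV. \<Sum>k\<in>UNIV. Q a b g j k * (x $ j * x $ k)) = (\<Sum>s\<in>UNIV. \<Sum>t\<in>UNIV. F s t x a b g)"
      using L by simp
  qed
qed

lemma pd_add3:
  assumes "f differentiable (at x)" "g differentiable (at x)" "h differentiable (at x)"
  shows "pd d (\<lambda>y. f y + g y + h y) x = pd d f x + pd d g x + pd d h x"
proof -
  have "pd d (\<lambda>y. (f y + g y) + h y) x = pd d (\<lambda>y. f y + g y) x + pd d h x"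
    by (rule pd_add) (use assms in \<open>auto intro: differentiable_add\<close>)
  also have "pd d (\<lambda>y. f y + g y) x = pd d f x + pd d g x" by (rule pd_add) (use assms in auto)
  finally show ?thesis .
qed

lemma zero3:
  assumes "smooth_fun f" "smooth_fun g" "smooth_fun h" "\<And>y. f y + g y + h y = 0"
  shows "pd d f x + pd d g x + pd d h x = 0"
proof -
  have "pd d (\<lambda>y. f y + g y + h y) x = 0" by (rule pd_zero_fun) (rule assms(4))
  then show ?thesis using pd_add3[OF smooth_diff[OF assms(1)] smooth_diff[OF assms(2)] smooth_diff[OF assms(3)]] by simp
qed

theorem mainTheorem18:
  fixes T :: "point \<Rightarrow> idx \<Rightarrow> idx \<Rightarrow> idx \<Rightarrow> real"
  assumes "mixed_killing T"
  shows "\<exists>(m::nat) (c::nat \<Rightarrow> real) (X::nat \<Rightarrow> point \<Rightarrow> idx \<Rightarrow> idx \<Rightarrow> real)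
            (\<xi>::nat \<Rightarrow> point \<Rightarrow> idx \<Rightarrow> real).
           (\<forall>i<m. killing_yano (X i) \<and> killing_vector (\<xi> i)) \<and>
           (\<forall>x a b g. T x a b g =
              (\<Sum>i<m. c i * ((X i x a b * \<xi> i x g + X i x a g * \<xi> i x b) / 2)))"
proof -
  from assms obtain N where
    sm: "\<And>a b c. smooth_fun (\<lambda>x. T x a b c)" and
    anti: "\<And>x a b c. N x a b c = - N x b a c" and
    TN: "\<And>x a b c. T x a b c = (N x a b c + N x a c b) / 2" and
    K: "\<And>x a b c d. (pd d (\<lambda>y. T y a b c) x + pd b (\<lambda>y. T y a c d) x + pd c (\<lambda>y. T y a d b) x
       + pd d (\<lambda>y. T y a c b) x + pd c (\<lambda>y. T y a b d) x + pd b (\<lambda>y. T y a d c) x) / 6 = 0"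
    unfolding mixed_killing_def smooth3_def by blast
  have Tfun: "(\<lambda>y. T y a b c) = (\<lambda>y. T y a c b)" for a b c
    by (rule ext) (simp add: TN)
  have Tcyc: "T y a b c + T y b c a + T y c a b = 0" for y a b c
    using TN[of y a b c] TN[of y b c a] TN[of y c a b] anti[of y b a c] anti[of y c a b] anti[of y c b a]
    by (simp add: field_simps)
  have K3: "pd d (\<lambda>y. T y a b c) x + pd b (\<lambda>y. T y a c d) x + pd c (\<lambda>y. T y a d b) x = 0" for x a b c d
  proof -
    have "pd d (\<lambda>y. T y a c b) x = pd d (\<lambda>y. T y a b c) x" using Tfun[of a c b] by simp
    moreover have "pd c (\<lambda>y. T y a b d) x = pd c (\<lambda>y. T y a d b) x" using Tfun[of a b d] by simp
    moreover have "pd b (\<lambda>y. T y a d c) x = pd b (\<lambda>y. T y a c d) x" using Tfun[of a d c] by simp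
    ultimately show ?thesis using K[of d a b c x] by (simp add: field_simps)
  qed
  have smp: "smooth_fun (pd d (\<lambda>y. T y a b c))" for d a b c by (rule smooth_pd[OF sm])
  have smpp: "smooth_fun (pd e (pd d (\<lambda>y. T y a b c)))" for e d a b c by (rule smooth_pd[OF smp])
  have sw: "pd e (pd d (\<lambda>y. T y a b c)) = pd d (pd e (\<lambda>y. T y a b c))" for e d a b c
    by (rule ext) (rule schwarz[OF sm])
  have d3: "pd i (pd j (pd k (\<lambda>y. T y a b c))) x = 0" for i j k a b c x
  proof -
    define D where "D b c d e f = pd f (pd e (pd d (\<lambda>y. T y a b c))) x" for b c d e f
    have "D b c k j i = 0"
    proof (rule D3_zero)
      show "D b c d e f = D c b d e f" for b c d e f unfolding D_def using Tfun[of a b c] by simp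
      show "D b c d e f = D b c e d f" for b c d e f unfolding D_def using sw[of e d a b c] by simp
      show "D b c d e f = D b c d f e" for b c d e f unfolding D_def by (rule schwarz[OF smp])
      show "D b c d e f + D c d b e f + D d b c e f = 0" for b c d e f
      proof -
        have "pd e (pd d (\<lambda>y. T y a b c)) y + pd e (pd b (\<lambda>y. T y a c d)) y + pd e (pd c (\<lambda>y. T y a d b)) y = 0" for y
          by (rule zero3[OF smp smp smp]) (rule K3)
        then show ?thesis unfolding D_def by (rule zero3[OF smpp smpp smpp])
      qed
    qed
    then show ?thesis unfolding D_def .
  qed
  define P where "P a b c d = pd d (\<lambda>y. T y a b c) 0" for a b c d
  define Q where "Q a b c d e = pd d (pd e (\<lambda>y. T y a b c)) 0 / 2" for a b c d e
  have Texp: "T x a b g = T 0 a b g + (\<Sum>j\<in>UNIV. P a b g j * x $ j) + (\<Sum>j\<in>UNIV. \<Sum>k\<in>UNIV. Q a b g j k * (x $ j * x $ k))" for x a b g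
    using quad_rep[OF sm d3, of x] unfolding P_def Q_def poly2_def by simp
  have rep0: "rep (\<lambda>x a b g. T 0 a b g)"
    by (rule rep_ext[OF rep_const_part[of "N 0"]]) (rule anti, rule TN)
  have rep1: "rep (\<lambda>x a b g. \<Sum>j\<in>UNIV. P a b g j * x $ j)"
  proof (rule rep_lin_part)
    show "P a b c d = P a c b d" for a b c d unfolding P_def using Tfun[of a b c] by simp
    show "P a b c d + P b c a d + P c a b d = 0" for a b c d unfolding P_def
      by (rule zero3[OF sm sm sm]) (rule Tcyc)
    show "P a b c d + P a c d b + P a d b c = 0" for a b c d unfolding P_def by (rule K3)
  qed
  have rep2: "rep (\<lambda>x a b g. \<Sum>j\<in>UNIV. \<Sum>k\<in>UNIV. Q a b g j k * (x $ j * x $ k))"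
  proof (rule rep_quad_part)
    show "Q a b c d e = Q a c b d e" for a b c d e unfolding Q_def using Tfun[of a b c] by simp
    show "Q a b c d e = Q a b c e d" for a b c d e unfolding Q_def using sw[of d e a b c] by simp
    show "Q a b c d e + Q b c a d e + Q c a b d e = 0" for a b c d e
    proof -
      have "pd e (\<lambda>y. T y a b c) y + pd e (\<lambda>y. T y b c a) y + pd e (\<lambda>y. T y c a b) y = 0" for y
        by (rule zero3[OF sm sm sm]) (rule Tcyc)
      then have "pd d (pd e (\<lambda>y. T y a b c)) 0 + pd d (pd e (\<lambda>y. T y b c a)) 0 + pd d (pd e (\<lambda>y. T y c a b)) 0 = 0"
        by (rule zero3[OF smp smp smp])
      then show ?thesis unfolding Q_def by simp
    qed
    show "Q a b c d e + Q a c d b e + Q a d b c e = 0" for a b c d e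
    proof -
      have "pd e (pd d (\<lambda>y. T y a b c)) 0 + pd e (pd b (\<lambda>y. T y a c d)) 0 + pd e (pd c (\<lambda>y. T y a d b)) 0 = 0"
        by (rule zero3[OF smp smp smp]) (rule K3)
      then show ?thesis unfolding Q_def using sw[of e d a b c] sw[of e b a c d] sw[of e c a d b] by simp
    qed
  qed
  have "rep (\<lambda>x a b g. T 0 a b g + (\<Sum>j\<in>UNIV. P a b g j * x $ j) + (\<Sum>j\<in>UNIV. \<Sum>k\<in>UNIV. Q a b g j k * (x $ j * x $ k)))"
    by (intro rep_add rep0 rep1 rep2)
  then have "rep T" by (rule rep_ext) (rule Texp)
  then show ?thesis unfolding rep_def .
qed

end
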